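(* For a barcode $f$ with $n \ge 1$ bars, $\Delta(f^{\wedge p})$ for any integer $p \ge 1$ can be obtained from $n$ and $C(f^{\wedge n})$: if $f, f'$ are barcodes both with exactly $n\ge1$ bars and $C(f^{\wedge n}) = C(f'^{\wedge n})$, then $\Delta(f^{\wedge p}) = \Delta(f'^{\wedge p})$ for all $p\ge1$.
   Context: A barcode is a finite formal sum $f = \sum_{i=1}^n x^{\alpha_i}y^{\ell_i}$ with $\alpha_i \in \mathbb{R}$, $\ell_i \in \mathbb{R}_{>0}$ (a multiset of $n$ bars). Its $p$-th exterior power ($p\ge1$) is $f^{\wedge p} = \sum_{1\le i_1<\cdots<i_p\le n} x^{\alpha_{i_1}+\cdots+\alpha_{i_p}}y^{\min\{\ell_{i_1},\ldots,\ell_{i_p}\}}$ (zero if $p>n$). The critical series is $C(f) = \sum_i x^{\alpha_i} - \sum_i x^{\alpha_i+\ell_i}$ (a finite integer combination of symbols $x^g$, $g\in\mathbb{R}$), and the drift is $\Delta(f) = \sum_{i=1}^n \alpha_i$. *)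

theory Defs
  imports Complex_Main "HOL-Library.Multiset"
begin

text \<open>A bar x^alpha y^ell is the pair (alpha, ell). A formal sum of bars is a multiset of pairs.
A barcode is such a multiset in which every length ell is positive; we represent a barcode with
n bars by a list of length n (bar i is f ! i), so that index subsets give the exterior power
with the correct multiplicities.\<close>

type_synonym bar = "real \<times> real"

definition is_barcode :: "bar list \<Rightarrow> bool" where
  "is_barcode f \<longleftrightarrow> (\<forall>b \<in> set f. snd b > 0)"

definition ext_power :: "nat \<Rightarrow> bar list \<Rightarrow> bar multiset" where
  "ext_power p f = image_mset
     (\<lambda>S. (\<Sum>i\<in>S. fst (f ! i), Min ((\<lambda>i. snd (f ! i)) ` S)))
     (mset_set {S. S \<subseteq> {..<length f} \<and> card S = p})"

text \<open>Critical series: an integer combination of symbols x^g, as the coefficient function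
 g \<mapsto> #{bars with alpha = g} - #{bars with alpha + ell = g}.\<close>
definition critical :: "bar multiset \<Rightarrow> (real \<Rightarrow> int)" where
  "critical F = (\<lambda>g. int (size (filter_mset (\<lambda>b. fst b = g) F))
                   - int (size (filter_mset (\<lambda>b. fst b + snd b = g) F)))"

definition drift :: "bar multiset \<Rightarrow> real" where
  "drift F = (\<Sum>b\<in>#F. fst b)"

end

theory Submission
  imports Defs
begin

lemma card_contain:
  assumes "finite A" "i \<in> A" "p \<ge> 1"
  shows "card {S. S \<subseteq> A \<and> card S = p \<and> i \<in> S} = (card A - 1) choose (p - 1)"
proof -
  have "bij_betw (\<lambda>T. insert i T) {T. T \<subseteq> A - {i} \<and> card T = p - 1}
          {S. S \<subseteq> A \<and> card S = p \<and> i \<in> S}"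
  proof (rule bij_betw_byWitness[where f' = "\<lambda>S. S - {i}"])
    show "(\<lambda>T. insert i T) ` {T. T \<subseteq> A - {i} \<and> card T = p - 1} \<subseteq> {S. S \<subseteq> A \<and> card S = p \<and> i \<in> S}"
    proof
      fix T0 assume "T0 \<in> (\<lambda>T. insert i T) ` {T. T \<subseteq> A - {i} \<and> card T = p - 1}"
      then obtain T where T0: "T0 = insert i T" and T: "T \<in> {T. T \<subseteq> A - {i} \<and> card T = p - 1}" by blast
      hence "finite T" using assms(1) finite_subset by blast
      moreover have "i \<notin> T" using T by auto
      ultimately show "T0 \<in> {S. S \<subseteq> A \<and> card S = p \<and> i \<in> S}" using T T0 assms by auto
    qed
    show "(\<lambda>S. S - {i}) ` {S. S \<subseteq> A \<and> card S = p \<and> i \<in> S} \<subseteq> {T. T \<subseteq> A - {i} \<and> card T = p - 1}"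
    proof
      fix S0 assume "S0 \<in> (\<lambda>S. S - {i}) ` {S. S \<subseteq> A \<and> card S = p \<and> i \<in> S}"
      then obtain S where S0: "S0 = S - {i}" and S: "S \<in> {S. S \<subseteq> A \<and> card S = p \<and> i \<in> S}" by blast
      hence "finite S" using assms(1) finite_subset by blast
      with S S0 show "S0 \<in> {T. T \<subseteq> A - {i} \<and> card T = p - 1}" by auto
    qed
  qed auto
  hence "card {S. S \<subseteq> A \<and> card S = p \<and> i \<in> S} = card {T. T \<subseteq> A - {i} \<and> card T = p - 1}"
    by (simp add: bij_betw_same_card)
  also have "\<dots> = card (A - {i}) choose (p - 1)"
    using assms by (simp add: n_subsets)
  finally show ?thesis using assms by simp
qed

lemma sum_subsets:
  fixes g :: "nat \<Rightarrow> real"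
  assumes "finite A" "p \<ge> 1"
  shows "(\<Sum>S\<in>{S. S \<subseteq> A \<and> card S = p}. \<Sum>i\<in>S. g i) = real ((card A - 1) choose (p - 1)) * (\<Sum>i\<in>A. g i)"
proof -
  let ?U = "{S. S \<subseteq> A \<and> card S = p}"
  have fU: "finite ?U" using assms(1) by simp
  have "(\<Sum>S\<in>?U. \<Sum>i\<in>S. g i) = (\<Sum>S\<in>?U. \<Sum>i\<in>{i\<in>A. i \<in> S}. g i)"
    by (rule sum.cong) (auto intro!: sum.cong)
  also have "\<dots> = (\<Sum>i\<in>A. \<Sum>S\<in>{S\<in>?U. i \<in> S}. g i)"
    using sum.swap_restrict[OF fU assms(1), of "\<lambda>S i. g i" "\<lambda>S i. i \<in> S"] by simp
  also have "\<dots> = (\<Sum>i\<in>A. real ((card A - 1) choose (p - 1)) * g i)"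
  proof (rule sum.cong)
    fix i assume "i \<in> A"
    have "{S\<in>?U. i \<in> S} = {S. S \<subseteq> A \<and> card S = p \<and> i \<in> S}" by auto
    with card_contain[OF assms(1) \<open>i\<in>A\<close> assms(2)]
    show "(\<Sum>S\<in>{S\<in>?U. i \<in> S}. g i) = real ((card A - 1) choose (p - 1)) * g i" by simp
  qed simp
  finally show ?thesis by (simp add: sum_distrib_left)
qed

lemma drift_ext:
  assumes "p \<ge> 1"
  shows "drift (ext_power p f) = real ((length f - 1) choose (p - 1)) * (\<Sum>i<length f. fst (f ! i))"
proof -
  have "drift (ext_power p f) = (\<Sum>S\<in>{S. S \<subseteq> {..<length f} \<and> card S = p}. \<Sum>i\<in>S. fst (f ! i))"
    unfolding drift_def ext_power_def
    by (simp add: image_mset.compositionality comp_def sum_unfold_sum_mset)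
  also have "\<dots> = real ((length f - 1) choose (p - 1)) * (\<Sum>i<length f. fst (f ! i))" using sum_subsets[OF _ assms, of "{..<length f}"] by simp
  finally show ?thesis .
qed

lemma ext_full:
  assumes "length f = n"
  shows "ext_power n f = {# ((\<Sum>i<n. fst (f ! i)), Min ((\<lambda>i. snd (f ! i)) ` {..<n})) #}"
proof -
  have "{S. S \<subseteq> {..<length f} \<and> card S = n} = {{..<n}}"
    using assms card_subset_eq[of "{..<n}"] by auto
  thus ?thesis unfolding ext_power_def by simp
qed

lemma min_pos:
  assumes "is_barcode f" "length f = n" "n \<ge> 1"
  shows "Min ((\<lambda>i. snd (f ! i)) ` {..<n}) > 0"
  using assms by (subst Min_gr_iff) (auto simp: is_barcode_def lessThan_empty_iff)

lemma crit_single: "critical {#(a, m)#} g = (if a = g then 1 else 0) - (if a + m = g then 1 else 0)"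
  unfolding critical_def by simp

theorem proposition10:
  fixes f f' :: "bar list" and n :: nat
  assumes "is_barcode f" and "is_barcode f'"
    and "length f = n" and "length f' = n" and "n \<ge> 1"
    and "critical (ext_power n f) = critical (ext_power n f')"
  shows "\<forall>p::nat. p \<ge> 1 \<longrightarrow> drift (ext_power p f) = drift (ext_power p f')"
proof -
  define a where "a = (\<Sum>i<n. fst (f ! i))"
  define a' where "a' = (\<Sum>i<n. fst (f' ! i))"
  define m where "m = Min ((\<lambda>i. snd (f ! i)) ` {..<n})"
  define m' where "m' = Min ((\<lambda>i. snd (f' ! i)) ` {..<n})"
  have mp: "m > 0" using min_pos[OF assms(1,3,5)] m_def by simp
  have mp': "m' > 0" using min_pos[OF assms(2,4,5)] m'_def by simp
  have "critical {#(a, m)#} a = critical {#(a', m')#} a"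
    using assms(6) ext_full[OF assms(3)] ext_full[OF assms(4)] a_def a'_def m_def m'_def by simp
  hence "a = a'" using mp mp' unfolding crit_single by (auto split: if_splits)
  thus ?thesis using drift_ext assms(3,4) a_def a'_def by simp
qed

end
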